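(* Let $G$ be a graph and $w$ a vertex of $G$ adjacent to two leaves $v_1$ and $v_2$. Then $$\phi(G)\le \sum_{u\in N(w)\setminus\{v_1\}}\phi\big(G-(N[w]\cup N[u])\big)+\phi(G-\{w,v_1,v_2\})+\phi(G-N[w]).$$
   Context: Graphs are finite and simple; a leaf is a vertex of degree $1$. $N(v)$ is the neighborhood of $v$, $N[v]=N(v)\cup\{v\}$, and $G-S$ is the subgraph induced by $V(G)\setminus S$. A subset $F$ of vertices is a dissociation set if $G[F]$ has maximum degree at most $1$; a maximal dissociation set is one not properly contained in another dissociation set; $\phi(G)$ is the number of maximal dissociation sets of $G$, with $\phi=1$ for the graph with no vertices. *)

theory Defs
  imports Main
begin

text \<open>Induced subgraphs G - S are
  represented by the vertex set V - S with the same relation E (only edges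
  between remaining vertices are ever consulted).\<close>

definition simple_graph :: "'a set \<Rightarrow> ('a \<Rightarrow> 'a \<Rightarrow> bool) \<Rightarrow> bool" where
  "simple_graph V E \<longleftrightarrow> finite V \<and> (\<forall>x y. E x y \<longrightarrow> E y x)
     \<and> (\<forall>x. \<not> E x x) \<and> (\<forall>x y. E x y \<longrightarrow> x \<in> V \<and> y \<in> V)"

definition nbhd :: "'a set \<Rightarrow> ('a \<Rightarrow> 'a \<Rightarrow> bool) \<Rightarrow> 'a \<Rightarrow> 'a set" where
  "nbhd V E v = {u \<in> V. E v u}"

definition cnbhd :: "'a set \<Rightarrow> ('a \<Rightarrow> 'a \<Rightarrow> bool) \<Rightarrow> 'a \<Rightarrow> 'a set" where
  "cnbhd V E v = insert v (nbhd V E v)"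

definition degree :: "'a set \<Rightarrow> ('a \<Rightarrow> 'a \<Rightarrow> bool) \<Rightarrow> 'a \<Rightarrow> nat" where
  "degree V E v = card (nbhd V E v)"

definition leaf :: "'a set \<Rightarrow> ('a \<Rightarrow> 'a \<Rightarrow> bool) \<Rightarrow> 'a \<Rightarrow> bool" where
  "leaf V E v \<longleftrightarrow> v \<in> V \<and> degree V E v = 1"

definition dissociation_set :: "'a set \<Rightarrow> ('a \<Rightarrow> 'a \<Rightarrow> bool) \<Rightarrow> 'a set \<Rightarrow> bool" where
  "dissociation_set V E F \<longleftrightarrow> F \<subseteq> V \<and> (\<forall>x\<in>F. card {y \<in> F. E x y} \<le> 1)"

definition maximal_dissociation_set :: "'a set \<Rightarrow> ('a \<Rightarrow> 'a \<Rightarrow> bool) \<Rightarrow> 'a set \<Rightarrow> bool" where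
  "maximal_dissociation_set V E F \<longleftrightarrow> dissociation_set V E F \<and>
     \<not> (\<exists>F'. F \<subset> F' \<and> dissociation_set V E F')"

definition phi :: "'a set \<Rightarrow> ('a \<Rightarrow> 'a \<Rightarrow> bool) \<Rightarrow> nat" where
  "phi V E = card {F. maximal_dissociation_set V E F}"

end

theory Submission
  imports Defs
begin

lemma restrict_mds:
  assumes sg: "simple_graph V E" and m: "maximal_dissociation_set V E F"
   and nadj: "\<And>x y. x \<in> V - K \<Longrightarrow> y \<in> F \<inter> K \<Longrightarrow> \<not> E x y"
  shows "maximal_dissociation_set (V - K) E (F - K)"
proof -
  have fin: "finite V" and sym: "\<And>x y. E x y \<Longrightarrow> E y x"
    using sg unfolding simple_graph_def by auto
  have FV: "F \<subseteq> V" and deg: "\<And>x. x \<in> F \<Longrightarrow> card {y\<in>F. E x y} \<le> 1"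
    using m unfolding maximal_dissociation_set_def dissociation_set_def by auto
  have finF: "finite F" using FV fin finite_subset by blast
  have d1: "dissociation_set (V-K) E (F-K)"
    unfolding dissociation_set_def
  proof (intro conjI ballI)
    show "F - K \<subseteq> V - K" using FV by blast
    fix x assume x: "x \<in> F - K"
    have "card {y \<in> F-K. E x y} \<le> card {y\<in>F. E x y}"
      by (rule card_mono) (use finF in auto)
    then show "card {y \<in> F-K. E x y} \<le> 1" using deg[of x] x by auto
  qed
  moreover have "\<not> (\<exists>F'. F - K \<subset> F' \<and> dissociation_set (V-K) E F')"
  proof
    assume "\<exists>F'. F - K \<subset> F' \<and> dissociation_set (V-K) E F'"
    then obtain F' where sub: "F-K \<subset> F'" and dF': "dissociation_set (V-K) E F'" by blast
    have F'V: "F' \<subseteq> V - K" using dF' unfolding dissociation_set_def by auto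
    have degF': "\<And>x. x \<in> F' \<Longrightarrow> card {y\<in>F'. E x y} \<le> 1"
      using dF' unfolding dissociation_set_def by auto
    define F2 where "F2 = F' \<union> (F \<inter> K)"
    have "F \<subseteq> F2" using sub unfolding F2_def by blast
    moreover obtain z where "z \<in> F'" "z \<notin> F - K" using sub by blast
    then have "z \<in> F2" "z \<notin> F" using F'V unfolding F2_def by auto
    ultimately have ss: "F \<subset> F2" by blast
    have "dissociation_set V E F2"
      unfolding dissociation_set_def
    proof (intro conjI ballI)
      show "F2 \<subseteq> V" using F'V FV unfolding F2_def by blast
      fix x assume x: "x \<in> F2"
      show "card {y\<in>F2. E x y} \<le> 1"
      proof (cases "x \<in> F'")
        case True
        then have "{y\<in>F2. E x y} = {y\<in>F'. E x y}" using nadj F'V by (auto simp: F2_def)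
        then show ?thesis using degF' True by auto
      next
        case False
        then have xFK: "x \<in> F \<inter> K" using x F2_def by auto
        have "{y\<in>F2. E x y} \<subseteq> {y\<in>F. E x y}"
        proof
          fix y assume y: "y \<in> {y\<in>F2. E x y}"
          show "y \<in> {y\<in>F. E x y}"
          proof (cases "y \<in> F'")
            case True
            then have "y \<in> V - K" using F'V by auto
            with nadj[OF this xFK] sym y show ?thesis by auto
          next
            case False then show ?thesis using y F2_def by auto
          qed
        qed
        then have "card {y\<in>F2. E x y} \<le> card {y\<in>F. E x y}"
          by (rule card_mono[rotated]) (use finF in auto)
        then show ?thesis using deg[of x] xFK by auto
      qed
    qed
    with ss m show False unfolding maximal_dissociation_set_def by blast
  qed
  ultimately show ?thesis unfolding maximal_dissociation_set_def by blast
qed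

lemma card_class_le:
  assumes sg: "simple_graph V E"
    and A: "A \<subseteq> {F. maximal_dissociation_set V E F}"
    and X: "\<And>F. F \<in> A \<Longrightarrow> F \<inter> K = X"
    and nadj: "\<And>x y. x \<in> V - K \<Longrightarrow> y \<in> X \<Longrightarrow> \<not> E x y"
  shows "card A \<le> phi (V - K) E"
proof -
  have fin: "finite V" using sg unfolding simple_graph_def by auto
  have img: "(\<lambda>F. F - K) ` A \<subseteq> {F. maximal_dissociation_set (V-K) E F}"
  proof
    fix G assume "G \<in> (\<lambda>F. F - K) ` A"
    then obtain F where F: "F \<in> A" "G = F - K" by blast
    have "maximal_dissociation_set (V - K) E (F - K)"
      by (rule restrict_mds[OF sg]) (use A F X nadj in auto)
    then show "G \<in> {F. maximal_dissociation_set (V-K) E F}" using F by auto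
  qed
  have inj: "inj_on (\<lambda>F. F - K) A"
  proof (rule inj_onI)
    fix F G assume "F \<in> A" "G \<in> A" "F - K = G - K"
    moreover have "F = (F - K) \<union> (F \<inter> K)" "G = (G - K) \<union> (G \<inter> K)" by auto
    ultimately show "F = G" using X by metis
  qed
  have "{F. maximal_dissociation_set (V-K) E F} \<subseteq> Pow (V - K)"
    unfolding maximal_dissociation_set_def dissociation_set_def by auto
  then have "finite {F. maximal_dissociation_set (V-K) E F}"
    using fin finite_subset by (metis finite_Diff finite_Pow_iff)
  from card_inj_on_le[OF inj img this] show ?thesis unfolding phi_def .
qed

lemma two_nb:
  assumes "finite V" "dissociation_set V E F" "x \<in> F" "a \<in> F" "b \<in> F" "E x a" "E x b"
  shows "a = b"
proof (rule ccontr)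
  assume ab: "a \<noteq> b"
  have fF: "finite F" using assms(1,2) unfolding dissociation_set_def using finite_subset by blast
  have "{a,b} \<subseteq> {y\<in>F. E x y}" using assms by auto
  then have "card {a,b} \<le> card {y\<in>F. E x y}" by (rule card_mono[rotated]) (use fF in auto)
  moreover have "card {y\<in>F. E x y} \<le> 1" using assms(2,3) unfolding dissociation_set_def by auto
  ultimately show False using ab by auto
qed

theorem lemma2p4:
  fixes V :: "'a set" and E :: "'a \<Rightarrow> 'a \<Rightarrow> bool" and w v1 v2 :: 'a
  assumes "simple_graph V E"
    and "w \<in> V"
    and "v1 \<noteq> v2"
    and "E w v1" and "E w v2"
    and "leaf V E v1" and "leaf V E v2"
  shows "phi V E \<le>
     (\<Sum>u \<in> nbhd V E w - {v1}. phi (V - (cnbhd V E w \<union> cnbhd V E u)) E)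
     + phi (V - {w, v1, v2}) E + phi (V - cnbhd V E w) E"
proof -
  note sg = assms(1)
  have fin: "finite V" and sym: "\<And>x y. E x y \<Longrightarrow> E y x" and irr: "\<And>x. \<not> E x x"
    and EV: "\<And>x y. E x y \<Longrightarrow> x \<in> V \<and> y \<in> V"
    using sg unfolding simple_graph_def by auto
  have nb: "nbhd V E v = {w}" if "leaf V E v" "E w v" for v
  proof -
    have "w \<in> nbhd V E v" using that assms(2) sym unfolding nbhd_def by auto
    moreover have "card (nbhd V E v) = 1" using that unfolding leaf_def degree_def by auto
    ultimately show ?thesis by (metis card_1_singletonE singletonD)
  qed
  have adj: "x = w" if "leaf V E v" "E w v" "E x v" for x v
  proof -
    have "x \<in> nbhd V E v" using that sym EV unfolding nbhd_def by auto
    then show ?thesis using nb[OF that(1,2)] by auto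
  qed
  have v1V: "v1 \<in> V" "v2 \<in> V" using EV assms(4,5) by auto
  let ?M = "{F. maximal_dissociation_set V E F}"
  have finM: "\<And>F. F \<in> ?M \<Longrightarrow> finite F"
    using fin finite_subset unfolding maximal_dissociation_set_def dissociation_set_def by blast
  have fa: "v \<in> F" if F: "F \<in> ?M" "w \<notin> F" and v: "leaf V E v" "E w v" for F v
  proof (rule ccontr)
    assume vF: "v \<notin> F"
    have vV: "v \<in> V" using v unfolding leaf_def by auto
    have "dissociation_set V E (insert v F)"
      unfolding dissociation_set_def
    proof (intro conjI ballI)
      show "insert v F \<subseteq> V" using F vV unfolding maximal_dissociation_set_def dissociation_set_def by auto
      fix x assume x: "x \<in> insert v F"
      show "card {y \<in> insert v F. E x y} \<le> 1"
      proof (cases "x = v")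
        case True
        have "{y \<in> insert v F. E x y} = {}"
        proof (rule equals0I)
          fix y assume y: "y \<in> {y \<in> insert v F. E x y}"
          then have "y = w" using True adj[OF v, of y] sym by auto
          then show False using y True F(2) irr by auto
        qed
        then show ?thesis by (simp only: card.empty)
      next
        case False
        then have xF: "x \<in> F" using x by auto
        have "{y \<in> insert v F. E x y} = {y \<in> F. E x y}" using adj[OF v] F(2) xF by auto
        then show ?thesis using F(1) xF unfolding maximal_dissociation_set_def dissociation_set_def by auto
      qed
    qed
    moreover have "F \<subset> insert v F" using vF by auto
    ultimately show False using F(1) unfolding maximal_dissociation_set_def by blast
  qed
  have fb: "\<exists>u. u \<in> F \<and> E w u" if F: "F \<in> ?M" "w \<in> F" for F
  proof (rule ccontr)
    assume no: "\<not> (\<exists>u. u \<in> F \<and> E w u)"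
    then have vF: "v1 \<notin> F" using assms(4) by auto
    have "dissociation_set V E (insert v1 F)"
      unfolding dissociation_set_def
    proof (intro conjI ballI)
      show "insert v1 F \<subseteq> V" using F v1V unfolding maximal_dissociation_set_def dissociation_set_def by auto
      fix x assume x: "x \<in> insert v1 F"
      show "card {y \<in> insert v1 F. E x y} \<le> 1"
      proof (cases "x = v1 \<or> x = w")
        case True
        obtain z where z: "{y \<in> insert v1 F. E x y} \<subseteq> {z}"
        proof (cases "x = v1")
          case True
          have "{y \<in> insert v1 F. E x y} \<subseteq> {w}"
          proof
            fix y assume "y \<in> {y \<in> insert v1 F. E x y}"
            then have "E y v1" using True sym by auto
            then show "y \<in> {w}" using adj[OF assms(6,4)] by auto
          qed
          then show ?thesis using that by blast
        next
          case False
          then have xw: "x = w" using \<open>x = v1 \<or> x = w\<close> by auto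
          have "{y \<in> insert v1 F. E x y} \<subseteq> {v1}" using no xw by auto
          then show ?thesis using that by blast
        qed
        have "card {y \<in> insert v1 F. E x y} \<le> card {z}"
          using z by (rule card_mono[rotated]) auto
        then show ?thesis by simp
      next
        case False
        then have xF: "x \<in> F" using x by auto
        have "{y \<in> insert v1 F. E x y} = {y \<in> F. E x y}" using adj[OF assms(6,4)] False by auto
        then show ?thesis using F(1) xF unfolding maximal_dissociation_set_def dissociation_set_def by auto
      qed
    qed
    moreover have "F \<subset> insert v1 F" using vF by auto
    ultimately show False using F(1) unfolding maximal_dissociation_set_def by blast
  qed
  have fc: "F \<inter> (cnbhd V E w \<union> cnbhd V E u) = {w, u}"
    if F: "F \<in> ?M" "w \<in> F" "u \<in> F" "E w u" for F u
  proof -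
    have d: "dissociation_set V E F" using F(1) unfolding maximal_dissociation_set_def by auto
    show ?thesis
    proof
      show "{w, u} \<subseteq> F \<inter> (cnbhd V E w \<union> cnbhd V E u)" using F unfolding cnbhd_def by auto
      show "F \<inter> (cnbhd V E w \<union> cnbhd V E u) \<subseteq> {w, u}"
      proof
        fix y assume y: "y \<in> F \<inter> (cnbhd V E w \<union> cnbhd V E u)"
        then consider "y = w" | "y = u" | "E w y" | "E u y" unfolding cnbhd_def nbhd_def by auto
        then show "y \<in> {w, u}"
        proof cases
          case 3 then show ?thesis using two_nb[OF fin d F(2) _ F(3) _ F(4)] y by auto
        next
          case 4 then show ?thesis using two_nb[OF fin d F(3) _ F(2) _ sym[OF F(4)]] y by auto
        qed auto
      qed
    qed
  qed
  define A0 where "A0 = {F \<in> ?M. w \<notin> F}"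
  define Au where "Au u = {F \<in> ?M. w \<in> F \<and> u \<in> F \<and> E w u}" for u
  have cov: "?M \<subseteq> A0 \<union> (\<Union>u \<in> nbhd V E w. Au u)"
  proof
    fix F assume F: "F \<in> ?M"
    show "F \<in> A0 \<union> (\<Union>u \<in> nbhd V E w. Au u)"
    proof (cases "w \<in> F")
      case True
      then obtain u where "u \<in> F" "E w u" using fb F by blast
      then show ?thesis using F True EV unfolding Au_def nbhd_def by auto
    qed (use F A0_def in auto)
  qed
  have finN: "finite (nbhd V E w)" using fin unfolding nbhd_def by auto
  have finMM: "finite ?M"
  proof -
    have "?M \<subseteq> Pow V" unfolding maximal_dissociation_set_def dissociation_set_def by auto
    then show ?thesis using fin finite_subset by blast
  qed
  have c0: "card A0 \<le> phi (V - {w, v1, v2}) E"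
  proof (rule card_class_le[OF sg, where X = "{v1, v2}"])
    show "A0 \<subseteq> ?M" unfolding A0_def by auto
    fix F assume "F \<in> A0"
    then show "F \<inter> {w, v1, v2} = {v1, v2}"
      using fa[OF _ _ assms(6,4), of F] fa[OF _ _ assms(7,5), of F] unfolding A0_def by auto
  next
    fix x y assume "x \<in> V - {w, v1, v2}" "y \<in> {v1, v2}"
    then show "\<not> E x y" using adj[OF assms(6,4)] adj[OF assms(7,5)] by auto
  qed
  have cu: "card (Au u) \<le> phi (V - (cnbhd V E w \<union> cnbhd V E u)) E" if u: "u \<in> nbhd V E w" for u
  proof (rule card_class_le[OF sg, where X = "{w, u}"])
    show "Au u \<subseteq> ?M" unfolding Au_def by auto
    fix F assume "F \<in> Au u"
    then show "F \<inter> (cnbhd V E w \<union> cnbhd V E u) = {w, u}" using fc unfolding Au_def by auto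
  next
    fix x y assume "x \<in> V - (cnbhd V E w \<union> cnbhd V E u)" "y \<in> {w, u}"
    then show "\<not> E x y" using sym unfolding cnbhd_def nbhd_def by auto
  qed
  have v1N: "v1 \<in> nbhd V E w" using assms(4) v1V unfolding nbhd_def by auto
  have cw: "cnbhd V E w \<union> cnbhd V E v1 = cnbhd V E w"
    using nb[OF assms(6,4)] v1N unfolding cnbhd_def by auto
  have "phi V E \<le> card (A0 \<union> (\<Union>u \<in> nbhd V E w. Au u))"
    unfolding phi_def
  proof (rule card_mono[OF _ cov])
    have "A0 \<subseteq> ?M" "\<And>u. Au u \<subseteq> ?M" unfolding A0_def Au_def by auto
    then show "finite (A0 \<union> (\<Union>u \<in> nbhd V E w. Au u))"
      using finMM finite_subset by (metis (no_types, lifting) UN_least Un_least)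
  qed
  also have "\<dots> \<le> card A0 + card (\<Union>u \<in> nbhd V E w. Au u)" by (rule card_Un_le)
  also have "card (\<Union>u \<in> nbhd V E w. Au u) \<le> (\<Sum>u \<in> nbhd V E w. card (Au u))"
    by (rule card_UN_le[OF finN])
  also have "\<dots> \<le> (\<Sum>u \<in> nbhd V E w. phi (V - (cnbhd V E w \<union> cnbhd V E u)) E)"
    by (rule sum_mono) (rule cu)
  also have "\<dots> = phi (V - (cnbhd V E w \<union> cnbhd V E v1)) E
      + (\<Sum>u \<in> nbhd V E w - {v1}. phi (V - (cnbhd V E w \<union> cnbhd V E u)) E)"
    by (rule sum.remove[OF finN v1N])
  finally show ?thesis using c0 cw by simp
qed

end
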